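(* Let $\epsilon\in(0,1)$, $d\ge1$, and let $f$ be the binary-tree function of depth $d$ on $n=2^{d+1}-2$ variables, with unit costs and $p_i=\frac{1+\epsilon}{2}$ for all $i$. Then $$\mathsf{OPT}_{\mathcal A}(f,c,p)\le 2\sum_{i=0}^{d}(1+\epsilon)^i.$$
   Context: Stochastic Boolean Function Evaluation setup: the input $x\in\{0,1\}^n$ has independent coordinates with $\Pr(x_i=1)=p_i$; testing $x_i$ costs $c_i$ (here $c_i=1$). A strategy tests variables sequentially until $f(x)$ is determined (i.e. $f(x')=f(x)$ for all $x'$ agreeing with $x$ on tested coordinates); an adaptive strategy may choose each next test based on previous outcomes. $\mathsf{OPT}_{\mathcal A}(f,c,p)$ is the minimum expected total test cost over adaptive strategies. Binary-tree function of depth $d$: in the complete binary tree of depth $d$ (root at depth $0$, $2^d$ leaves), the $n=2^{d+1}-2$ edges are numbered $1,\dots,n$ and variable $x_i$ is associated with edge $i$; a leaf is alive if $x_i=1$ for every edge on its root-to-leaf path, and $f(x)=1$ iff some leaf is alive. *)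

theory Defs
  imports Complex_Main
begin

definition inputs :: "nat \<Rightarrow> (nat \<Rightarrow> bool) set" where
  "inputs n = {x. \<forall>i. x i \<longrightarrow> i \<in> {1..n}}"

text \<open>Adaptive strategies as decision trees: Test i t0 t1 tests x_i and
continues with t0 if x_i = 0 and with t1 if x_i = 1; Stop halts.\<close>

datatype dtree = Stop | Test nat dtree dtree

fun tested :: "dtree \<Rightarrow> (nat \<Rightarrow> bool) \<Rightarrow> nat list" where
  "tested Stop x = []"
| "tested (Test i t0 t1) x = i # tested (if x i then t1 else t0) x"

definition evaluates :: "nat \<Rightarrow> ((nat \<Rightarrow> bool) \<Rightarrow> bool) \<Rightarrow> dtree \<Rightarrow> bool" where
  "evaluates n f T \<longleftrightarrow>
     (\<forall>x\<in>inputs n. \<forall>x'\<in>inputs n.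
        (\<forall>i\<in>set (tested T x). x' i = x i) \<longrightarrow> f x' = f x)"

definition prob_input :: "nat \<Rightarrow> (nat \<Rightarrow> real) \<Rightarrow> (nat \<Rightarrow> bool) \<Rightarrow> real" where
  "prob_input n p x = (\<Prod>i\<in>{1..n}. if x i then p i else 1 - p i)"

definition exp_cost :: "nat \<Rightarrow> (nat \<Rightarrow> real) \<Rightarrow> (nat \<Rightarrow> real) \<Rightarrow> dtree \<Rightarrow> real" where
  "exp_cost n c p T = (\<Sum>x\<in>inputs n. prob_input n p x * sum_list (map c (tested T x)))"

definition OPT_A :: "nat \<Rightarrow> ((nat \<Rightarrow> bool) \<Rightarrow> bool) \<Rightarrow> (nat \<Rightarrow> real) \<Rightarrow> (nat \<Rightarrow> real) \<Rightarrow> real" where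
  "OPT_A n f c p = Inf (exp_cost n c p ` {T. evaluates n f T})"

text \<open>Binary-tree function of depth d, heap numbering: nodes 1..2^(d+1)-1, root 1,
children of v are 2v and 2v+1, leaves 2^d..2^(d+1)-1. The edge entering node u
(u >= 2) is edge number u - 1, so edges are numbered 1..2^(d+1)-2. The ancestors
of v (including v) are v div 2^k.\<close>

definition leaf_alive :: "(nat \<Rightarrow> bool) \<Rightarrow> nat \<Rightarrow> bool" where
  "leaf_alive x v \<longleftrightarrow> (\<forall>k::nat. v div 2^k \<ge> 2 \<longrightarrow> x (v div 2^k - 1))"

definition bt_fun :: "nat \<Rightarrow> (nat \<Rightarrow> bool) \<Rightarrow> bool" where
  "bt_fun d x \<longleftrightarrow> (\<exists>v\<in>{2^d..<2^(d+1)}. leaf_alive x v)"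

end

theory Submission
  imports Defs
begin

fun seq :: "dtree \<Rightarrow> dtree \<Rightarrow> dtree" where
  "seq Stop T = T"
| "seq (Test i a b) T = Test i (seq a T) (seq b T)"

lemma tested_seq: "tested (seq A B) x = tested A x @ tested B x"
  by (induction A) auto

fun strat :: "nat \<Rightarrow> nat \<Rightarrow> dtree" where
  "strat v 0 = Stop"
| "strat v (Suc h) = seq (Test (2*v-1) Stop (strat (2*v) h)) (Test (2*v) Stop (strat (2*v+1) h))"

lemma tested_strat_Suc:
  "tested (strat v (Suc h)) x = (2*v-1) # (if x (2*v-1) then tested (strat (2*v) h) x else [])
     @ (2*v) # (if x (2*v) then tested (strat (2*v+1) h) x else [])"
  by (simp add: tested_seq)

declare strat.simps(2)[simp del]

lemma tested_local:
  "(\<forall>i\<in>set (tested T x). x' i = x i) \<Longrightarrow> tested T x' = tested T x"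
  by (induction T) auto

lemma tested_strat_ge: "v \<ge> 1 \<Longrightarrow> set (tested (strat v h) x) \<subseteq> {2*v-1..}"
proof (induction h arbitrary: v)
  case 0 then show ?case by simp
next
  case (Suc h)
  have a: "set (tested (strat (2*v) h) x) \<subseteq> {2*v-1..}"
    using Suc.IH[of "2*v"] Suc.prems by force
  have b: "set (tested (strat (2*v+1) h) x) \<subseteq> {2*v-1..}"
    using Suc.IH[of "2*v+1"] Suc.prems by force
  show ?case using a b by (auto simp: tested_strat_Suc)
qed

lemma len_indep:
  assumes "u \<ge> 1" "j < 2*u - 1"
  shows "length (tested (strat u h) (x(j:=b))) = length (tested (strat u h) x)"
proof -
  have "tested (strat u h) (x(j:=b)) = tested (strat u h) x"
    apply (rule tested_local)
    using tested_strat_ge[OF assms(1), of h x] assms(2) by auto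
  then show ?thesis by simp
qed

definition E :: "nat \<Rightarrow> real \<Rightarrow> ((nat \<Rightarrow> bool) \<Rightarrow> real) \<Rightarrow> real" where
  "E n p g = (\<Sum>x\<in>inputs n. prob_input n (\<lambda>_. p) x * g x)"

lemma inputs_eq: "inputs n = (\<lambda>S i. i \<in> S) ` Pow {1..n}"
proof
  show "inputs n \<subseteq> (\<lambda>S i. i \<in> S) ` Pow {1..n}"
  proof
    fix x assume "x \<in> inputs n"
    then have "{i. x i} \<in> Pow {1..n}" "x = (\<lambda>i. i \<in> {i. x i})" by (auto simp: inputs_def)
    then show "x \<in> (\<lambda>S i. i \<in> S) ` Pow {1..n}" by blast
  qed
qed (auto simp: inputs_def)

lemma finite_inputs: "finite (inputs n)"
  by (simp add: inputs_eq)

definition R :: "nat \<Rightarrow> real \<Rightarrow> nat \<Rightarrow> (nat \<Rightarrow> bool) \<Rightarrow> real" where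
  "R n p j x = (\<Prod>i\<in>{1..n}-{j}. if x i then p else 1 - p)"

lemma prob_split:
  assumes "j \<in> {1..n}"
  shows "prob_input n (\<lambda>_. p) x = (if x j then p else 1 - p) * R n p j x"
  unfolding prob_input_def R_def using assms by (simp add: prod.remove)

lemma R_upd: "R n p j (x(j:=b)) = R n p j x"
  unfolding R_def by (intro prod.cong) auto

lemma indep:
  assumes j: "j \<in> {1..n}" and g: "\<And>x b. g (x(j:=b)) = g x"
  shows "(\<Sum>x\<in>inputs n. prob_input n (\<lambda>_. p) x * (if x j then g x else 0))
         = p * E n p g"
proof -
  define A where "A = {x\<in>inputs n. \<not> x j}"
  define B where "B = {x\<in>inputs n. x j}"
  have fin: "finite A" "finite B" using finite_inputs unfolding A_def B_def by auto
  have AB: "inputs n = A \<union> B" "A \<inter> B = {}" unfolding A_def B_def by auto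
  have Bim: "B = (\<lambda>y. y(j:=True)) ` A"
  proof
    show "B \<subseteq> (\<lambda>y. y(j:=True)) ` A"
    proof
      fix x assume x: "x \<in> B"
      then have "x(j:=False) \<in> A" using j by (auto simp: A_def B_def inputs_def)
      moreover have "x = (x(j:=False))(j:=True)" using x by (auto simp: B_def fun_eq_iff)
      ultimately show "x \<in> (\<lambda>y. y(j:=True)) ` A" by blast
    qed
  qed (use j in \<open>auto simp: A_def B_def inputs_def split: if_splits\<close>)
  have inj: "inj_on (\<lambda>y. y(j:=True)) A"
  proof (rule inj_onI)
    fix y z assume yz: "y \<in> A" "z \<in> A" and eq: "y(j:=True) = z(j:=True)"
    show "y = z"
    proof
      fix i show "y i = z i"
      proof (cases "i = j")
        case True then show ?thesis using yz by (simp add: A_def)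
      next
        case False then show ?thesis using fun_cong[OF eq, of i] by simp
      qed
    qed
  qed
  have sumB: "(\<Sum>x\<in>B. h x) = (\<Sum>y\<in>A. h (y(j:=True)))" for h :: "(nat \<Rightarrow> bool) \<Rightarrow> real"
    unfolding Bim by (rule sum.reindex[OF inj, unfolded comp_def])
  have L: "(\<Sum>x\<in>inputs n. prob_input n (\<lambda>_. p) x * (if x j then g x else 0))
      = (\<Sum>y\<in>A. p * (R n p j y * g y))"
  proof -
    have "(\<Sum>x\<in>inputs n. prob_input n (\<lambda>_. p) x * (if x j then g x else 0))
       = (\<Sum>x\<in>A. prob_input n (\<lambda>_. p) x * (if x j then g x else 0))
       + (\<Sum>x\<in>B. prob_input n (\<lambda>_. p) x * (if x j then g x else 0))"
      unfolding AB(1) by (rule sum.union_disjoint[OF fin AB(2)])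
    also have "(\<Sum>x\<in>A. prob_input n (\<lambda>_. p) x * (if x j then g x else 0)) = 0"
      by (rule sum.neutral) (auto simp: A_def)
    also have "(\<Sum>x\<in>B. prob_input n (\<lambda>_. p) x * (if x j then g x else 0))
       = (\<Sum>y\<in>A. p * (R n p j y * g y))"
      unfolding sumB by (intro sum.cong refl) (simp add: prob_split[OF j] R_upd g)
    finally show ?thesis by simp
  qed
  have Rt: "E n p g = (\<Sum>y\<in>A. R n p j y * g y)"
  proof -
    have "E n p g = (\<Sum>x\<in>A. prob_input n (\<lambda>_. p) x * g x)
       + (\<Sum>x\<in>B. prob_input n (\<lambda>_. p) x * g x)"
      unfolding E_def AB(1) by (rule sum.union_disjoint[OF fin AB(2)])
    also have "(\<Sum>x\<in>A. prob_input n (\<lambda>_. p) x * g x) = (\<Sum>y\<in>A. (1-p) * (R n p j y * g y))"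
      by (intro sum.cong refl) (auto simp: prob_split[OF j] A_def)
    also have "(\<Sum>x\<in>B. prob_input n (\<lambda>_. p) x * g x) = (\<Sum>y\<in>A. p * (R n p j y * g y))"
      unfolding sumB by (intro sum.cong refl) (simp add: prob_split[OF j] R_upd g)
    finally show ?thesis by (simp add: sum.distrib[symmetric] algebra_simps)
  qed
  show ?thesis unfolding L Rt by (simp add: sum_distrib_left)
qed

lemma total_prob: "(\<Sum>x\<in>inputs n. prob_input n (\<lambda>_. p) x) = 1"
proof -
  have inj: "inj_on (\<lambda>S i. i \<in> S) (Pow {1..n})"
    by (rule inj_onI) (auto simp: fun_eq_iff)
  have "(\<Sum>x\<in>inputs n. prob_input n (\<lambda>_. p) x)
      = (\<Sum>S\<in>Pow {1..n}. prob_input n (\<lambda>_. p) (\<lambda>i. i \<in> S))"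
    unfolding inputs_eq by (rule sum.reindex[OF inj, unfolded comp_def])
  also have "\<dots> = (\<Sum>S\<in>Pow {1..n}. (\<Prod>i\<in>S. p) * (\<Prod>i\<in>{1..n}-S. 1 - p))"
  proof (intro sum.cong refl)
    fix S assume S: "S \<in> Pow {1..n}"
    have "prob_input n (\<lambda>_. p) (\<lambda>i. i \<in> S)
        = (\<Prod>i\<in>{1..n} \<inter> {i. i \<in> S}. p) * (\<Prod>i\<in>{1..n} \<inter> - {i. i \<in> S}. 1 - p)"
      unfolding prob_input_def by (rule prod.If_cases) simp
    also have "{1..n} \<inter> {i. i \<in> S} = S" using S by auto
    also have "{1..n} \<inter> - {i. i \<in> S} = {1..n} - S" by auto
    finally show "prob_input n (\<lambda>_. p) (\<lambda>i. i \<in> S) = (\<Prod>i\<in>S. p) * (\<Prod>i\<in>{1..n}-S. 1 - p)"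
      by simp
  qed
  also have "\<dots> = (\<Prod>i\<in>{1..n}. p + (1 - p))"
    by (rule prod_add[symmetric]) simp
  finally show ?thesis by simp
qed


lemma exp_strat:
  assumes "v \<ge> 1" "(v+1)*2^h \<le> n+2"
  shows "E n p (\<lambda>x. real (length (tested (strat v h) x))) = 2*(\<Sum>i<h. (2*p)^i)"
  using assms
proof (induction h arbitrary: v)
  case 0 then show ?case by (simp add: E_def)
next
  case (Suc h)
  define L1 where "L1 = (\<lambda>x. real (length (tested (strat (2*v) h) x)))"
  define L2 where "L2 = (\<lambda>x. real (length (tested (strat (2*v+1) h) x)))"
  have eq: "real (length (tested (strat v (Suc h)) x))
     = 2 + (if x (2*v-1) then L1 x else 0) + (if x (2*v) then L2 x else 0)" for x
    unfolding L1_def L2_def tested_strat_Suc by simp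
  have "(2::nat) \<le> 2^(Suc h)" by simp
  then have "(v+1)*2 \<le> (v+1)*2^(Suc h)" by (rule mult_le_mono2)
  then have "(v+1)*2 \<le> n+2" using Suc.prems(2) by (rule le_trans)
  then have vn: "2*v \<le> n" by simp
  have j1: "2*v-1 \<in> {1..n}" using vn Suc.prems by auto
  have j2: "2*v \<in> {1..n}" using vn Suc.prems by auto
  have g1: "L1 (x(2*v-1:=b)) = L1 x" for x b
    unfolding L1_def using len_indep[of "2*v" "2*v-1"] Suc.prems by simp
  have g2: "L2 (x(2*v:=b)) = L2 x" for x b
    unfolding L2_def using len_indep[of "2*v+1" "2*v"] Suc.prems by simp
  have "(2*v+1)*2^h \<le> (v+1)*2^(Suc h)" by simp
  then have E1: "E n p L1 = 2*(\<Sum>i<h. (2*p)^i)"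
    unfolding L1_def using Suc.IH[of "2*v"] Suc.prems by simp
  have "(2*v+1+1)*2^h = (v+1)*2^(Suc h)" by simp
  then have E2: "E n p L2 = 2*(\<Sum>i<h. (2*p)^i)"
    unfolding L2_def using Suc.IH[of "2*v+1"] Suc.prems by simp
  have "E n p (\<lambda>x. real (length (tested (strat v (Suc h)) x)))
     = 2 * (\<Sum>x\<in>inputs n. prob_input n (\<lambda>_. p) x)
       + (\<Sum>x\<in>inputs n. prob_input n (\<lambda>_. p) x * (if x (2*v-1) then L1 x else 0))
       + (\<Sum>x\<in>inputs n. prob_input n (\<lambda>_. p) x * (if x (2*v) then L2 x else 0))"
    unfolding E_def eq by (simp add: distrib_left sum.distrib sum_distrib_left algebra_simps)
  also have "\<dots> = 2 + p * E n p L1 + p * E n p L2"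
    using indep[OF j1 g1, of p] indep[OF j2 g2, of p] total_prob[of n p] by simp
  also have "\<dots> = 2*(\<Sum>i<Suc h. (2*p)^i)"
    unfolding E1 E2 sum.lessThan_Suc_shift by (simp add: sum_distrib_left algebra_simps)
  finally show ?case .
qed


fun alive :: "(nat \<Rightarrow> bool) \<Rightarrow> nat \<Rightarrow> nat \<Rightarrow> bool" where
  "alive x v 0 = True"
| "alive x v (Suc h) = ((x (2*v-1) \<and> alive x (2*v) h) \<or> (x (2*v) \<and> alive x (2*v+1) h))"

lemma alive_det:
  "(\<forall>i\<in>set (tested (strat v h) x). x' i = x i) \<Longrightarrow> alive x' v h = alive x v h"
proof (induction h arbitrary: v)
  case 0 then show ?case by simp
next
  case (Suc h)
  have a: "x' (2*v-1) = x (2*v-1)" "x' (2*v) = x (2*v)"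
    using Suc.prems by (auto simp: tested_strat_Suc)
  have b: "x (2*v-1) \<Longrightarrow> alive x' (2*v) h = alive x (2*v) h"
    using Suc.prems by (intro Suc.IH) (auto simp: tested_strat_Suc)
  have c: "x (2*v) \<Longrightarrow> alive x' (2*v+1) h = alive x (2*v+1) h"
    using Suc.prems by (intro Suc.IH) (auto simp: tested_strat_Suc)
  show ?case using a b c by auto
qed

lemma alive_iff:
  "v \<ge> 1 \<Longrightarrow> alive x v h \<longleftrightarrow> (\<exists>w. w div 2^h = v \<and> (\<forall>k<h. x (w div 2^k - 1)))"
proof (induction h arbitrary: v)
  case 0 then show ?case by auto
next
  case (Suc h)
  have dv: "w div 2^(Suc h) = w div 2^h div 2" for w :: nat
    by (simp only: power_Suc2 div_mult2_eq)
  show ?case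
  proof
    assume "alive x v (Suc h)"
    then consider "x (2*v-1)" "alive x (2*v) h" | "x (2*v)" "alive x (2*v+1) h" by auto
    then show "\<exists>w. w div 2^Suc h = v \<and> (\<forall>k<Suc h. x (w div 2^k - 1))"
    proof cases
      case 1
      then obtain w where w: "w div 2^h = 2*v" "\<forall>k<h. x (w div 2^k - 1)"
        using Suc.IH[of "2*v"] Suc.prems by auto
      have "\<forall>k<Suc h. x (w div 2^k - 1)" using w 1 by (auto simp: less_Suc_eq)
      moreover have "w div 2^Suc h = v" unfolding dv w(1) by simp
      ultimately show ?thesis by blast
    next
      case 2
      then obtain w where w: "w div 2^h = 2*v+1" "\<forall>k<h. x (w div 2^k - 1)"
        using Suc.IH[of "2*v+1"] Suc.prems by auto
      have "\<forall>k<Suc h. x (w div 2^k - 1)" using w 2 by (auto simp: less_Suc_eq)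
      moreover have "w div 2^Suc h = v" unfolding dv w(1) by simp
      ultimately show ?thesis by blast
    qed
  next
    assume "\<exists>w. w div 2^Suc h = v \<and> (\<forall>k<Suc h. x (w div 2^k - 1))"
    then obtain w where w: "w div 2^Suc h = v" "\<forall>k<Suc h. x (w div 2^k - 1)" by blast
    define u where "u = w div 2^h"
    have "u div 2 = v" using w(1) unfolding dv u_def by simp
    then have u: "u = 2*v \<or> u = 2*v+1" by auto
    have xu: "x (u - 1)" using w(2) u_def by auto
    have u1: "u \<ge> 1" using u Suc.prems by auto
    have "\<exists>w'. w' div 2^h = u \<and> (\<forall>k<h. x (w' div 2^k - 1))"
      using w(2) u_def by auto
    then have "alive x u h" using Suc.IH[OF u1] by blast
    then show "alive x v (Suc h)" using u xu by auto
  qed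
qed

lemma leaf_range:
  fixes w d :: nat
  shows "w div 2^d = 1 \<longleftrightarrow> w \<in> {2^d..<2^(d+1)}"
proof -
  have "w div 2^d = 1 \<longleftrightarrow> 0 < w div 2^d \<and> w div 2^d < 2" by auto
  also have "\<dots> \<longleftrightarrow> 2^d \<le> w \<and> w < 2 * 2^d"
    by (simp add: div_greater_zero_iff div_less_iff_less_mult)
  finally show ?thesis by auto
qed


lemma leaf_alive_iff:
  assumes "w \<in> {2^d..<2^(d+1)}"
  shows "leaf_alive x w \<longleftrightarrow> (\<forall>k<d. x (w div 2^k - 1))"
proof -
  have lo: "w div 2^k \<ge> 2" if "k < d" for k
  proof -
    have "(2::nat)^d div 2^k = 2^(d-k)" using that by (simp add: power_diff)
    moreover have "(2::nat) \<le> 2^(d-k)" using that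
    proof -
      have "(2::nat)^1 \<le> 2^(d-k)" by (rule power_increasing) (use that in auto)
      then show ?thesis by simp
    qed
    moreover have "(2::nat)^d div 2^k \<le> w div 2^k" using assms by (simp add: div_le_mono)
    ultimately show ?thesis by linarith
  qed
  have hi: "w div 2^k < 2" if "d \<le> k" for k
  proof -
    have "(2::nat)^d \<le> 2^k" using that by (rule power_increasing) simp
    then have "w div 2^k \<le> w div 2^d" using div_le_mono2[of "2^d" "2^k" w] by simp
    also have "\<dots> = 1" using leaf_range assms by blast
    finally show ?thesis by simp
  qed
  show ?thesis unfolding leaf_alive_def
  proof (intro iffI allI impI)
    fix k assume "\<forall>k. 2 \<le> w div 2^k \<longrightarrow> x (w div 2^k - 1)" "k < d"
    then show "x (w div 2^k - 1)" using lo by blast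
  next
    fix k assume "\<forall>k<d. x (w div 2^k - 1)" "2 \<le> w div 2^k"
    then show "x (w div 2^k - 1)" using hi not_le by blast
  qed
qed

lemma bt_alive: "bt_fun d x \<longleftrightarrow> alive x 1 d"
proof -
  have "bt_fun d x \<longleftrightarrow> (\<exists>w. w \<in> {2^d..<2^(d+1)} \<and> (\<forall>k<d. x (w div 2^k - 1)))"
    unfolding bt_fun_def using leaf_alive_iff by blast
  also have "\<dots> \<longleftrightarrow> (\<exists>w. w div 2^d = 1 \<and> (\<forall>k<d. x (w div 2^k - 1)))"
    using leaf_range by blast
  also have "\<dots> \<longleftrightarrow> alive x 1 d" using alive_iff[of 1] by simp
  finally show ?thesis .
qed

lemma strat_evaluates: "evaluates n (bt_fun d) (strat 1 d)"
  unfolding evaluates_def bt_alive using alive_det by blast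

theorem mainTheorem12:
  fixes \<epsilon> :: real and d :: nat
  assumes "0 < \<epsilon>" and "\<epsilon> < 1" and "1 \<le> d"
  shows "OPT_A (2^(d+1) - 2) (bt_fun d) (\<lambda>_. 1) (\<lambda>_. (1 + \<epsilon>) / 2)
           \<le> 2 * (\<Sum>i=0..d. (1 + \<epsilon>) ^ i)"
proof -
  define n :: nat where "n = 2^(d+1) - 2"
  define p :: real where "p = (1 + \<epsilon>) / 2"
  have two_p: "2*p = 1+\<epsilon>" by (simp add: p_def)
  have p01: "0 \<le> p" "p \<le> 1" using assms unfolding p_def by auto
  have "(2::nat) \<le> 2^(d+1)" by simp
  then have cond: "(1+1)*2^d \<le> n + 2" unfolding n_def by simp
  have cost: "exp_cost n (\<lambda>_. 1) (\<lambda>_. p) (strat 1 d) = 2*(\<Sum>i<d. (2*p)^i)"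
  proof -
    have "exp_cost n (\<lambda>_. 1) (\<lambda>_. p) (strat 1 d)
        = E n p (\<lambda>x. real (length (tested (strat 1 d) x)))"
      unfolding exp_cost_def E_def by (simp add: sum_list_triv)
    also have "\<dots> = 2*(\<Sum>i<d. (2*p)^i)" using exp_strat[of 1 d n p] cond by simp
    finally show ?thesis .
  qed
  have nonneg: "0 \<le> exp_cost n (\<lambda>_. 1) (\<lambda>_. p) T" for T
    unfolding exp_cost_def prob_input_def using p01
    by (intro sum_nonneg mult_nonneg_nonneg prod_nonneg sum_list_nonneg) auto
  have "OPT_A n (bt_fun d) (\<lambda>_. 1) (\<lambda>_. p) \<le> exp_cost n (\<lambda>_. 1) (\<lambda>_. p) (strat 1 d)"
    unfolding OPT_A_def
    by (rule cInf_lower) (use strat_evaluates nonneg in \<open>auto intro!: bdd_belowI[of _ 0]\<close>)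
  also have "\<dots> = 2*(\<Sum>i<d. (1+\<epsilon>)^i)" using cost two_p by simp
  also have "\<dots> \<le> 2*(\<Sum>i=0..d. (1+\<epsilon>)^i)"
    using assms by (intro mult_left_mono sum_mono2) auto
  finally show ?thesis unfolding n_def p_def .
qed

end
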